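(* The functor $\sigma:\mathcal{T}_q\to\mathcal{S}_q$ is full: for every morphism $S=[V\xleftarrow{f}D\xrightarrow{g}W]$ of $\mathcal{S}_q$ there is $T\in\mathrm{Hom}_{\mathcal{T}_q}(V,W)$ with $\sigma(T)=S$.
   Context: All vector spaces over $\mathbb{F}_2$. $\mathcal{E}_q^{deg}$: objects finite-dimensional quadratic spaces (possibly degenerate), morphisms injective linear maps preserving quadratic forms; pullbacks are intersections of images with restricted form. $\mathrm{Sp}(\mathcal{E}_q^{deg})$: morphisms spans $[V\leftarrow D\rightarrow W]$ up to iso of $D$, composed by pullback; $\mathcal{S}_q$ is its full subcategory on non-degenerate spaces (polar form $q(x+y)+q(x)+q(y)$ with trivial radical). $\mathcal{E}_q$: full subcategory of $\mathcal{E}_q^{deg}$ on non-degenerate spaces. Pseudo push-out of $f:V\to W=f(V)\perp V'$ and $g:V\to X=g(V)\perp V''$: $V\perp V'\perp V''$ with maps $f(v)+v'\mapsto v+v'$, $g(v)+v''\mapsto v+v''$. $\mathcal{T}_q$: objects of $\mathcal{E}_q$; morphisms classes of cospans $[V\to X\leftarrow W]$ in $\mathcal{E}_q$ modulo the equivalence relation generated by existence of an $\mathcal{E}_q$-morphism between middle objects compatible with the legs; composition by pseudo push-out. $\sigma$ is the identity on objects and sends $[V\to X\leftarrow W]$ to $[V\leftarrow V\times_X W\rightarrow W]$. *)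

theory Defs
  imports Main "HOL-Library.Z2"
begin

(* Ambient F_2-vector space: subsets of nat, addition = symmetric difference, zero = {}.
   Every finite-dimensional F_2-vector space is (isomorphic to) a finite subspace of it. *)
type_synonym vec = "nat set"

definition vadd :: "vec \<Rightarrow> vec \<Rightarrow> vec" where
  "vadd x y = (x - y) \<union> (y - x)"

record qspace =
  carrier :: "vec set"
  form :: "vec \<Rightarrow> bit"

definition polar :: "qspace \<Rightarrow> vec \<Rightarrow> vec \<Rightarrow> bit" where
  "polar Q x y = form Q (vadd x y) + form Q x + form Q y"

definition subspace :: "vec set \<Rightarrow> bool" where
  "subspace S \<longleftrightarrow> {} \<in> S \<and> (\<forall>x\<in>S. \<forall>y\<in>S. vadd x y \<in> S)"

(* quadratic form over F_2: q(0)=0 (q(\<lambda>x)=\<lambda>^2 q(x)) and bilinear polar form *)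
definition quad_space :: "qspace \<Rightarrow> bool" where
  "quad_space Q \<longleftrightarrow> finite (carrier Q) \<and> subspace (carrier Q) \<and> form Q {} = 0 \<and>
     (\<forall>x\<in>carrier Q. \<forall>y\<in>carrier Q. \<forall>z\<in>carrier Q.
        polar Q (vadd x y) z = polar Q x z + polar Q y z)"

definition nondeg :: "qspace \<Rightarrow> bool" where
  "nondeg Q \<longleftrightarrow> quad_space Q \<and>
     (\<forall>x\<in>carrier Q. (\<forall>y\<in>carrier Q. polar Q x y = 0) \<longrightarrow> x = {})"

definition qmor :: "qspace \<Rightarrow> qspace \<Rightarrow> (vec \<Rightarrow> vec) \<Rightarrow> bool" where
  "qmor Q R f \<longleftrightarrow> (\<forall>x\<in>carrier Q. f x \<in> carrier R) \<and>
     (\<forall>x\<in>carrier Q. \<forall>y\<in>carrier Q. f (vadd x y) = vadd (f x) (f y)) \<and>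
     inj_on f (carrier Q) \<and> (\<forall>x\<in>carrier Q. form R (f x) = form Q x)"

(* a span [V <- D -> W] *)
type_synonym span = "qspace \<times> (vec \<Rightarrow> vec) \<times> (vec \<Rightarrow> vec)"

(* equality of morphisms in Sp(E_q^deg): spans are identified up to isomorphism of the apex
   compatible with the legs *)
definition span_eq :: "span \<Rightarrow> span \<Rightarrow> bool" where
  "span_eq S S' \<longleftrightarrow> (case S of (D, f, g) \<Rightarrow> case S' of (D', f', g') \<Rightarrow>
     (\<exists>h. qmor D D' h \<and> h ` carrier D = carrier D' \<and>
          (\<forall>d\<in>carrier D. f' (h d) = f d \<and> g' (h d) = g d)))"

(* pullback in E_q^deg of i: V -> X <- W: j : intersection of images with restricted form *)
definition pullback_obj :: "qspace \<Rightarrow> qspace \<Rightarrow> qspace \<Rightarrow> (vec \<Rightarrow> vec) \<Rightarrow> (vec \<Rightarrow> vec) \<Rightarrow> qspace" where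
  "pullback_obj V W X i j = \<lparr>carrier = i ` carrier V \<inter> j ` carrier W, form = form X\<rparr>"

(* sigma applied to a cospan [V -i-> X <-j- W]: the span [V <- V x_X W -> W] *)
definition sigma_cospan :: "qspace \<Rightarrow> qspace \<Rightarrow> qspace \<Rightarrow> (vec \<Rightarrow> vec) \<Rightarrow> (vec \<Rightarrow> vec) \<Rightarrow> span" where
  "sigma_cospan V W X i j =
     (pullback_obj V W X i j, inv_into (carrier V) i, inv_into (carrier W) j)"

end

theory Submission
  imports Defs
begin

lemma bit_cases2: "(a::bit) = 0 \<or> a = 1" by (cases a) auto

lemma bit_add_self[simp]: "(a::bit) + a = 0"
  using bit_cases2[of a] by auto
lemma bit_add_self2[simp]: "(a::bit) + (a + b) = b"
  using bit_cases2[of a] bit_cases2[of b] by auto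


lemma of_nat_bit: "(of_nat n :: bit) = (if even n then 0 else 1)"
  by (induction n) auto

lemma vadd_comm: "vadd x y = vadd y x" unfolding vadd_def by auto
lemma vadd_assoc: "vadd (vadd x y) z = vadd x (vadd y z)" unfolding vadd_def by auto
lemma vadd_lcomm: "vadd x (vadd y z) = vadd y (vadd x z)" unfolding vadd_def by auto
lemma vadd_self[simp]: "vadd x x = {}" unfolding vadd_def by auto
lemma vadd_self2[simp]: "vadd x (vadd x y) = y" unfolding vadd_def by auto
lemma vadd_empty[simp]: "vadd x {} = x" "vadd {} x = x" unfolding vadd_def by auto
lemma vadd_eq_empty[simp]: "vadd x y = {} \<longleftrightarrow> x = y" unfolding vadd_def by auto
lemmas vadd_ac = vadd_comm vadd_assoc vadd_lcomm

definition lin :: "vec set \<Rightarrow> (vec \<Rightarrow> vec) \<Rightarrow> bool" where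
  "lin S f \<longleftrightarrow> (\<forall>x\<in>S. \<forall>y\<in>S. f (vadd x y) = vadd (f x) (f y))"

lemma lin_zero: "subspace S \<Longrightarrow> lin S f \<Longrightarrow> f {} = {}"
  unfolding lin_def subspace_def
  by (metis vadd_empty(1) vadd_self)

lemma sub_zero: "subspace S \<Longrightarrow> {} \<in> S" by (simp add: subspace_def)
lemma sub_add: "subspace S \<Longrightarrow> x \<in> S \<Longrightarrow> y \<in> S \<Longrightarrow> vadd x y \<in> S"
  by (simp add: subspace_def)

lemma retraction_aux:
  "\<forall>N. finite S \<and> subspace S \<and> subspace N \<and> N \<subseteq> S \<and> card S - card N = k \<longrightarrow>
     (\<exists>r. (\<forall>x\<in>S. r x \<in> N) \<and> (\<forall>x\<in>N. r x = x) \<and> lin S r)"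
proof (induction k rule: less_induct)
  case (less k)
  show ?case
  proof (intro allI impI)
    fix N assume H: "finite S \<and> subspace S \<and> subspace N \<and> N \<subseteq> S \<and> card S - card N = k"
    show "\<exists>r. (\<forall>x\<in>S. r x \<in> N) \<and> (\<forall>x\<in>N. r x = x) \<and> lin S r"
    proof (cases "N = S")
      case True
      then show ?thesis by (intro exI[of _ id]) (auto simp: lin_def)
    next
      case False
      then obtain s where s: "s \<in> S" "s \<notin> N" using H by blast
      define N' where "N' = N \<union> vadd s ` N"
      have sN': "subspace N'"
        unfolding subspace_def N'_def
      proof (intro conjI ballI)
        show "{} \<in> N \<union> vadd s ` N" using H sub_zero by blast
        fix x y assume x: "x \<in> N \<union> vadd s ` N" and y: "y \<in> N \<union> vadd s ` N"
        show "vadd x y \<in> N \<union> vadd s ` N"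
        proof -
          from x obtain a where a: "a \<in> N" "x = a \<or> x = vadd s a" by blast
          from y obtain b where b: "b \<in> N" "y = b \<or> y = vadd s b" by blast
          have ab: "vadd a b \<in> N" using H a b sub_add by blast
          have e1: "vadd a (vadd s b) = vadd s (vadd a b)" "vadd (vadd s a) b = vadd s (vadd a b)"
            "vadd (vadd s a) (vadd s b) = vadd a b" by (simp_all add: vadd_ac)
          from a b show ?thesis
            apply (elim disjE)
            using ab e1 by auto
        qed
      qed
      have N'S: "N' \<subseteq> S" unfolding N'_def using H s sub_add by blast
      have NN': "N \<subset> N'" unfolding N'_def using s H sub_zero
        by (metis Un_iff psubsetI sup_ge1 image_eqI vadd_empty(1))
      have "card N < card N'" using NN' H N'S finite_subset psubset_card_mono by blast
      moreover have "card N' \<le> card S" using N'S H card_mono by blast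
      ultimately have "card S - card N' < k" using H by linarith
      then obtain r where r: "\<forall>x\<in>S. r x \<in> N'" "\<forall>x\<in>N'. r x = x" "lin S r"
        using less.IH H sN' N'S by blast
      define t where "t y = (if y \<in> N then y else vadd s y)" for y
      have tN: "t y \<in> N" if "y \<in> N'" for y using that unfolding t_def N'_def by auto
      have tlin: "t (vadd x y) = vadd (t x) (t y)" if "x \<in> N'" "y \<in> N'" for x y
      proof -
        have snot: "vadd s a \<notin> N" if "a \<in> N" for a
          using that s H sub_add by (metis vadd_comm vadd_self2)
        from that obtain a b where a: "a \<in> N" "x = a \<or> x = vadd s a"
          and b: "b \<in> N" "y = b \<or> y = vadd s b" unfolding N'_def by blast
        have ab: "vadd a b \<in> N" using H a b sub_add by blast
        from a b show ?thesis
          apply (elim disjE)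
          using ab snot[OF ab] snot[OF a(1)] snot[OF b(1)] a(1) b(1)
          by (auto simp: t_def vadd_ac)
      qed
      show ?thesis
      proof (intro exI[of _ "t \<circ> r"] conjI ballI)
        fix x assume "x \<in> S" then show "(t \<circ> r) x \<in> N" using r tN by auto
      next
        fix x assume "x \<in> N" then show "(t \<circ> r) x = x" using r N'_def t_def by auto
      next
        show "lin S (t \<circ> r)" unfolding lin_def using r tlin H sub_add
          by (simp add: lin_def)
      qed
    qed
  qed
qed

lemma retraction:
  assumes "finite S" "subspace S" "subspace N" "N \<subseteq> S"
  shows "\<exists>r. (\<forall>x\<in>S. r x \<in> N) \<and> (\<forall>x\<in>N. r x = x) \<and> lin S r"
  using retraction_aux assms by blast

lemma bit_add_self3[simp]: "(a::bit) + b + a = b" "(a::bit) + (b + a) = b"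
  using bit_cases2[of a] bit_cases2[of b] by auto

lemma polar_sym: "polar Q x y = polar Q y x"
  unfolding polar_def by (simp add: vadd_comm add_ac del: add_bit_eq_xor)

context
  fixes Q assumes Q: "quad_space Q"
begin
lemma polar_add1: "x \<in> carrier Q \<Longrightarrow> y \<in> carrier Q \<Longrightarrow> z \<in> carrier Q \<Longrightarrow>
   polar Q (vadd x y) z = polar Q x z + polar Q y z"
  using Q unfolding quad_space_def by blast
lemma polar_add2: "x \<in> carrier Q \<Longrightarrow> y \<in> carrier Q \<Longrightarrow> z \<in> carrier Q \<Longrightarrow>
   polar Q z (vadd x y) = polar Q z x + polar Q z y"
  using polar_add1 polar_sym by metis
lemma form_zero: "form Q {} = 0" using Q unfolding quad_space_def by blast
lemma polar_zero: "polar Q x {} = 0" "polar Q {} x = 0"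
  unfolding polar_def using form_zero by (simp_all del: add_bit_eq_xor)
lemma form_add: "form Q (vadd x y) = form Q x + form Q y + polar Q x y"
  unfolding polar_def by (simp add: add_ac del: add_bit_eq_xor)
end

definition enc :: "vec \<Rightarrow> vec \<Rightarrow> vec" where
  "enc a b = (\<lambda>n. 2*n) ` a \<union> (\<lambda>n. Suc (2*n)) ` b"
definition pr1 :: "vec \<Rightarrow> vec" where "pr1 z = {n. 2*n \<in> z}"
definition pr2 :: "vec \<Rightarrow> vec" where "pr2 z = {n. Suc (2*n) \<in> z}"

lemma pr1_enc[simp]: "pr1 (enc a b) = a"
  unfolding pr1_def enc_def by auto presburger
lemma pr2_enc[simp]: "pr2 (enc a b) = b"
  unfolding pr2_def enc_def by auto presburger
lemma enc_inj[simp]: "enc a b = enc c d \<longleftrightarrow> a = c \<and> b = d"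
  by (metis pr1_enc pr2_enc)
lemma enc_zero[simp]: "enc {} {} = {}" unfolding enc_def by auto
lemma enc_eq_zero[simp]: "enc a b = {} \<longleftrightarrow> a = {} \<and> b = {}"
  by (metis enc_inj enc_zero)
lemma enc_vadd: "vadd (enc a b) (enc c d) = enc (vadd a c) (vadd b d)"
  unfolding enc_def vadd_def by auto presburger+

definition Bf :: "vec \<Rightarrow> vec \<Rightarrow> bit" where "Bf x y = of_nat (card (x \<inter> y))"

lemma card_vadd: "finite P \<Longrightarrow> finite Q \<Longrightarrow> card (vadd P Q) + 2 * card (P \<inter> Q) = card P + card Q"
proof -
  assume f: "finite P" "finite Q"
  have "card (vadd P Q) = card (P - Q) + card (Q - P)" unfolding vadd_def
    using f by (simp add: card_Un_disjoint disjoint_iff)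
  moreover have "card P = card (P - Q) + card (P \<inter> Q)" using f
    by (metis Diff_Diff_Int card_Diff_subset_Int finite_Int inf_le1 le_add_diff_inverse2 card_mono Int_commute)
  moreover have "card Q = card (Q - P) + card (P \<inter> Q)" using f
    by (metis Diff_Diff_Int card_Diff_subset_Int finite_Int inf_le1 le_add_diff_inverse2 card_mono Int_commute)
  ultimately show ?thesis by simp
qed

lemma of_nat_card_vadd: "finite P \<Longrightarrow> finite Q \<Longrightarrow>
   (of_nat (card (vadd P Q)) :: bit) = of_nat (card P) + of_nat (card Q)"
proof -
  assume f: "finite P" "finite Q"
  have "(of_nat (card (vadd P Q) + 2 * card (P \<inter> Q)) :: bit) = of_nat (card P + card Q)"
    using card_vadd[OF f] by simp
  then show ?thesis by (simp del: add_bit_eq_xor)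
qed

lemma Bf_add1: "finite y \<Longrightarrow> Bf (vadd x x') y = Bf x y + Bf x' y"
proof -
  assume f: "finite y"
  have "vadd x x' \<inter> y = vadd (x \<inter> y) (x' \<inter> y)" unfolding vadd_def by auto
  then show ?thesis unfolding Bf_def using f of_nat_card_vadd by simp
qed
lemma Bf_add2: "finite y \<Longrightarrow> finite y' \<Longrightarrow> Bf x (vadd y y') = Bf x y + Bf x y'"
proof -
  assume f: "finite y" "finite y'"
  have "x \<inter> vadd y y' = vadd (x \<inter> y) (x \<inter> y')" unfolding vadd_def by auto
  then show ?thesis unfolding Bf_def using f of_nat_card_vadd by simp
qed
lemma Bf_zero[simp]: "Bf {} y = 0" "Bf x {} = 0" unfolding Bf_def by auto
lemma Bf_single: "n \<in> x \<Longrightarrow> Bf x {n} = 1"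
  unfolding Bf_def by (simp add: Int_insert_right)

lemma hull:
  assumes A: "quad_space A"
  shows "\<exists>X e. nondeg X \<and> qmor A X e"
proof -
  define S where "S = carrier A"
  have fS: "finite S" and sS: "subspace S" using A unfolding quad_space_def S_def by auto
  define K where "K = (\<lambda>x. SOME n. n \<in> x) ` (S - {{}})"
  have fK: "finite K" unfolding K_def using fS by simp
  have Kx: "\<exists>n. n \<in> x \<and> n \<in> K" if "x \<in> S" "x \<noteq> {}" for x
  proof -
    have "(SOME n. n \<in> x) \<in> x" using that by (simp add: some_in_eq)
    then show ?thesis unfolding K_def using that by blast
  qed
  have fin: "finite y" if "y \<in> Pow K" for y using that fK finite_subset by blast
  have sP: "subspace (Pow K)" unfolding subspace_def vadd_def by auto
  define Y0 where "Y0 = {y \<in> Pow K. \<forall>a\<in>S. Bf a y = 0}"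
  have sY0: "subspace Y0" unfolding subspace_def Y0_def
    using sP[unfolded subspace_def] fin Bf_add2 by (auto simp del: add_bit_eq_xor)
  have Y0P: "Y0 \<subseteq> Pow K" unfolding Y0_def by auto
  obtain r where r: "\<forall>x\<in>Pow K. r x \<in> Y0" "\<forall>x\<in>Y0. r x = x" "lin (Pow K) r"
    using retraction[OF _ sP sY0 Y0P] fK by auto
  define C where "C = (\<lambda>y. vadd y (r y)) ` Pow K"
  have CP: "C \<subseteq> Pow K" unfolding C_def using r Y0P sP[unfolded subspace_def] by blast
  have sC: "subspace C" unfolding subspace_def
  proof (intro conjI ballI)
    have "r {} = {}" using lin_zero[OF sP r(3)] .
    then have "{} = vadd {} (r {})" by simp
    moreover have "{} \<in> Pow K" by simp
    ultimately show "{} \<in> C" unfolding C_def by (rule image_eqI)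
    fix x y assume "x \<in> C" "y \<in> C"
    then obtain a b where a: "a \<in> Pow K" "x = vadd a (r a)" and b: "b \<in> Pow K" "y = vadd b (r b)"
      unfolding C_def by (meson imageE)
    have rab: "r (vadd a b) = vadd (r a) (r b)" using r(3) a b unfolding lin_def by blast
    have "vadd x y = vadd (vadd a b) (r (vadd a b))"
      unfolding rab a b by (simp add: vadd_ac)
    moreover have "vadd a b \<in> Pow K" using a b sP[unfolded subspace_def] by blast
    ultimately show "vadd x y \<in> C" unfolding C_def by blast
  qed
  have CY0: "c = {}" if cc: "c \<in> C" "c \<in> Y0" for c
  proof -
    obtain a where a: "a \<in> Pow K" "c = vadd a (r a)" using cc(1) unfolding C_def by (meson imageE)
    have raK: "r a \<in> Pow K" using r a Y0P by blast
    have "r c = vadd (r a) (r (r a))" using r(3) a raK unfolding lin_def by blast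
    also have "\<dots> = {}" using r a by simp
    finally show ?thesis using r(2) cc(2) by simp
  qed
  have decomp: "\<exists>c\<in>C. \<exists>y0\<in>Y0. y = vadd c y0" if "y \<in> Pow K" for y
  proof (intro bexI)
    show "vadd y (r y) \<in> C" unfolding C_def using that by (rule imageI)
    show "r y \<in> Y0" using r(1) that by blast
    show "y = vadd (vadd y (r y)) (r y)" by (simp add: vadd_assoc)
  qed
  define X where "X = \<lparr>carrier = {enc x c | x c. x \<in> S \<and> c \<in> C},
                       form = \<lambda>z. form A (pr1 z) + Bf (pr1 z) (pr2 z)\<rparr>"
  have polX: "polar X (enc x c) (enc x' c') = polar A x x' + Bf x c' + Bf x' c"
    if "x \<in> S" "x' \<in> S" "c \<in> Pow K" "c' \<in> Pow K" for x x' c c'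
  proof -
    have "polar X (enc x c) (enc x' c') =
      form A (vadd x x') + Bf (vadd x x') (vadd c c') + (form A x + Bf x c) + (form A x' + Bf x' c')"
      unfolding polar_def X_def by (simp add: enc_vadd)
    also have "\<dots> = polar A x x' + Bf x c' + Bf x' c"
      using that fin by (simp add: form_add[OF A] Bf_add1 Bf_add2 add_ac del: add_bit_eq_xor)
    finally show ?thesis .
  qed
  have fX: "finite (carrier X)"
  proof -
    have "carrier X = (\<lambda>(x,c). enc x c) ` (S \<times> C)" unfolding X_def by auto
    moreover have "finite C" using CP fK by (meson finite_Pow_iff finite_subset)
    ultimately show ?thesis using fS by simp
  qed
  have sX: "subspace (carrier X)" unfolding subspace_def X_def
    using sS[unfolded subspace_def] sC[unfolded subspace_def]
    by (auto simp: enc_vadd) (metis enc_zero)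
  have qX: "quad_space X" unfolding quad_space_def
  proof (intro conjI ballI)
    show "finite (carrier X)" by (rule fX)
    show "subspace (carrier X)" by (rule sX)
    show "form X {} = 0" unfolding X_def using form_zero[OF A]
      by (metis Bf_zero(1) add_0 enc_zero pr1_enc qspace.select_convs(2))
    fix x y z assume "x \<in> carrier X" "y \<in> carrier X" "z \<in> carrier X"
    then obtain a1 c1 a2 c2 a3 c3 where h: "x = enc a1 c1" "y = enc a2 c2" "z = enc a3 c3"
      "a1 \<in> S" "a2 \<in> S" "a3 \<in> S" "c1 \<in> C" "c2 \<in> C" "c3 \<in> C"
      unfolding X_def by auto
    have hP: "c1 \<in> Pow K" "c2 \<in> Pow K" "c3 \<in> Pow K" using h CP by auto
    have aa: "vadd a1 a2 \<in> S" using sS h sub_add by blast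
    have cc: "vadd c1 c2 \<in> Pow K" using sP hP sub_add by blast
    show "polar X (vadd x y) z = polar X x z + polar X y z"
      unfolding h enc_vadd
      using polX[OF aa h(6) cc hP(3)] polX[OF h(4) h(6) hP(1) hP(3)] polX[OF h(5) h(6) hP(2) hP(3)]
        polar_add1[OF A, of a1 a2 a3] h fin hP
      by (simp add: Bf_add1 Bf_add2 S_def add_ac del: add_bit_eq_xor)
  qed
  have ndX: "nondeg X" unfolding nondeg_def
  proof (intro conjI ballI impI)
    show "quad_space X" by (rule qX)
    fix z assume z: "z \<in> carrier X" and orth: "\<forall>y\<in>carrier X. polar X z y = 0"
    then obtain x c where h: "z = enc x c" "x \<in> S" "c \<in> C" unfolding X_def by auto
    have cP: "c \<in> Pow K" using h CP by auto
    have all: "polar X z (enc x' y) = 0" if xy: "x' \<in> S" "y \<in> Pow K" for x' y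
    proof -
      obtain c' y0 where d: "c' \<in> C" "y0 \<in> Y0" "y = vadd c' y0" using decomp[OF xy(2)] by blast
      have c'P: "c' \<in> Pow K" and y0P: "y0 \<in> Pow K" using d CP Y0P by auto
      have "polar X z (enc x' c') = 0" using orth h d xy unfolding X_def by auto
      then have "polar A x x' + Bf x c' + Bf x' c = 0" using polX h xy c'P cP by simp
      moreover have "Bf x y0 = 0" using d h unfolding Y0_def by auto
      ultimately show ?thesis unfolding h using polX[OF h(2) xy(1) cP] xy d fin c'P y0P
        by (simp add: Bf_add2 add_ac del: add_bit_eq_xor)
    qed
    have x0: "x = {}"
    proof (rule ccontr)
      assume "x \<noteq> {}"
      then obtain n where n: "n \<in> x" "n \<in> K" using Kx h by blast
      have "polar X z (enc {} {n}) = 0" using all[of "{}" "{n}"] sS sub_zero n by auto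
      moreover have "polar X z (enc {} {n}) = 1"
        unfolding h using polX[OF h(2) sub_zero[OF sS] cP, of "{n}"] n
        by (simp add: Bf_single polar_zero[OF A] del: add_bit_eq_xor)
      ultimately show False by simp
    qed
    have "c \<in> Y0" unfolding Y0_def
    proof (intro CollectI conjI ballI)
      show "c \<in> Pow K" by (rule cP)
      fix a assume a: "a \<in> S"
      have "polar X z (enc a {}) = 0" using all[OF a] by simp
      moreover have "polar X z (enc a {}) = Bf a c" unfolding h using polX[OF h(2) a cP, of "{}"] x0
        by (simp add: polar_zero[OF A] del: add_bit_eq_xor)
      ultimately show "Bf a c = 0" by simp
    qed
    then have "c = {}" using CY0 h by blast
    then show "z = {}" using h x0 by simp
  qed
  have "qmor A X (\<lambda>x. enc x {})" unfolding qmor_def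
  proof (intro conjI ballI)
    fix x assume "x \<in> carrier A"
    then show "enc x {} \<in> carrier X" unfolding X_def S_def using sub_zero[OF sC] by auto
    show "form X (enc x {}) = form A x" unfolding X_def by simp
  next
    fix x y assume "x \<in> carrier A" "y \<in> carrier A"
    show "enc (vadd x y) {} = vadd (enc x {}) (enc y {})" by (simp add: enc_vadd)
  next
    show "inj_on (\<lambda>x. enc x {}) (carrier A)" by (auto intro: inj_onI)
  qed
  then show ?thesis using ndX by blast
qed

lemma qmor_lin: "qmor A B f \<Longrightarrow> lin (carrier A) f" unfolding qmor_def lin_def by blast
lemma qmor_zero: "quad_space A \<Longrightarrow> qmor A B f \<Longrightarrow> f {} = {}"
  using lin_zero qmor_lin quad_space_def by blast
lemma qmor_comp: "qmor A B f \<Longrightarrow> qmor B C g \<Longrightarrow> qmor A C (\<lambda>x. g (f x))"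
  unfolding qmor_def by (auto intro: inj_on_imageI2 comp_inj_on simp: inj_on_def)

lemma image_subspace:
  assumes "quad_space D" "qmor D V f"
  shows "subspace (f ` carrier D)"
proof -
  have s: "subspace (carrier D)" using assms quad_space_def by blast
  have "f {} = {}" using qmor_zero assms by blast
  then have "{} \<in> f ` carrier D" using sub_zero[OF s] by force
  moreover have "vadd x y \<in> f ` carrier D" if "x \<in> f ` carrier D" "y \<in> f ` carrier D" for x y
  proof -
    from that obtain a b where "a \<in> carrier D" "b \<in> carrier D" "x = f a" "y = f b" by blast
    then have "vadd x y = f (vadd a b)" "vadd a b \<in> carrier D"
      using assms(2) sub_add[OF s] unfolding qmor_def by auto
    then show ?thesis by blast
  qed
  ultimately show ?thesis unfolding subspace_def by blast
qed

lemma inv_lin: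
  assumes "quad_space D" "qmor D V f" "x \<in> f ` carrier D" "y \<in> f ` carrier D"
  shows "inv_into (carrier D) f (vadd x y) = vadd (inv_into (carrier D) f x) (inv_into (carrier D) f y)"
proof -
  have s: "subspace (carrier D)" using assms quad_space_def by blast
  from assms obtain a b where ab: "a \<in> carrier D" "b \<in> carrier D" "x = f a" "y = f b" by blast
  then have "vadd x y = f (vadd a b)" "vadd a b \<in> carrier D"
    using assms(2) sub_add[OF s] unfolding qmor_def by auto
  moreover have "inj_on f (carrier D)" using assms(2) qmor_def by blast
  ultimately show ?thesis using ab by (simp add: inv_into_f_f)
qed

lemma cospan_exists:
  assumes qV: "quad_space V" and qW: "quad_space W" and qD: "quad_space D"
    and mf: "qmor D V f" and mg: "qmor D W g"
  shows "\<exists>X0 i0 j0. quad_space X0 \<and> qmor V X0 i0 \<and> qmor W X0 j0 \<and>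
     (\<forall>v\<in>carrier V. \<forall>w\<in>carrier W. i0 v = j0 w \<longleftrightarrow> (\<exists>d\<in>carrier D. v = f d \<and> w = g d))"
proof -
  have sV: "subspace (carrier V)" "finite (carrier V)" using qV quad_space_def by auto
  have sW: "subspace (carrier W)" "finite (carrier W)" using qW quad_space_def by auto
  have sD: "subspace (carrier D)" using qD quad_space_def by auto
  have fD: "subspace (f ` carrier D)" "f ` carrier D \<subseteq> carrier V"
    using image_subspace[OF qD mf] mf unfolding qmor_def by auto
  have gD: "subspace (g ` carrier D)" "g ` carrier D \<subseteq> carrier W"
    using image_subspace[OF qD mg] mg unfolding qmor_def by auto
  obtain rV where rV: "\<forall>x\<in>carrier V. rV x \<in> f ` carrier D" "\<forall>x\<in>f ` carrier D. rV x = x" "lin (carrier V) rV"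
    using retraction[OF sV(2) sV(1) fD] by blast
  obtain rW where rW: "\<forall>x\<in>carrier W. rW x \<in> g ` carrier D" "\<forall>x\<in>g ` carrier D. rW x = x" "lin (carrier W) rW"
    using retraction[OF sW(2) sW(1) gD] by blast
  have injf: "inj_on f (carrier D)" and injg: "inj_on g (carrier D)" using mf mg qmor_def by auto
  define fi where "fi = inv_into (carrier D) f"
  define gi where "gi = inv_into (carrier D) g"
  define \<tau> where "\<tau> v = g (fi (rV v))" for v
  define \<kappa> where "\<kappa> w = f (gi (rW w))" for w
  have fi_in: "fi x \<in> carrier D" if "x \<in> f ` carrier D" for x
    unfolding fi_def using that by (simp add: inv_into_into)
  have gi_in: "gi x \<in> carrier D" if "x \<in> g ` carrier D" for x
    unfolding gi_def using that by (simp add: inv_into_into)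
  have \<tau>W: "\<tau> v \<in> carrier W" if "v \<in> carrier V" for v
  proof -
    have "fi (rV v) \<in> carrier D" using that rV(1) fi_in by blast
    then show ?thesis unfolding \<tau>_def using mg unfolding qmor_def by blast
  qed
  have \<kappa>V: "\<kappa> w \<in> carrier V" if "w \<in> carrier W" for w
  proof -
    have "gi (rW w) \<in> carrier D" using that rW(1) gi_in by blast
    then show ?thesis unfolding \<kappa>_def using mf unfolding qmor_def by blast
  qed
  have \<tau>lin: "\<tau> (vadd x y) = vadd (\<tau> x) (\<tau> y)" if "x \<in> carrier V" "y \<in> carrier V" for x y
  proof -
    have "rV (vadd x y) = vadd (rV x) (rV y)" using rV(3) that lin_def by blast
    then have "fi (rV (vadd x y)) = vadd (fi (rV x)) (fi (rV y))"
      using inv_lin[OF qD mf] rV(1) that unfolding fi_def by simp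
    then show ?thesis unfolding \<tau>_def using mg fi_in rV(1) that unfolding qmor_def by simp
  qed
  have \<kappa>lin: "\<kappa> (vadd x y) = vadd (\<kappa> x) (\<kappa> y)" if "x \<in> carrier W" "y \<in> carrier W" for x y
  proof -
    have "rW (vadd x y) = vadd (rW x) (rW y)" using rW(3) that lin_def by blast
    then have "gi (rW (vadd x y)) = vadd (gi (rW x)) (gi (rW y))"
      using inv_lin[OF qD mg] rW(1) that unfolding gi_def by simp
    then show ?thesis unfolding \<kappa>_def using mf gi_in rW(1) that unfolding qmor_def by simp
  qed
  have \<tau>f: "\<tau> (f d) = g d" if "d \<in> carrier D" for d
    unfolding \<tau>_def fi_def using rV(2) that injf by simp
  have \<kappa>g: "\<kappa> (g d) = f d" if "d \<in> carrier D" for d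
    unfolding \<kappa>_def gi_def using rW(2) that injg by simp
  define CX where "CX = {enc v w | v w. v \<in> carrier V \<and> w \<in> carrier W}"
  define FX where "FX = (\<lambda>z. form V (pr1 z) + form W (pr2 z) + polar W (\<tau> (pr1 z)) (pr2 z))"
  define X0 where "X0 = \<lparr>carrier = CX, form = FX\<rparr>"
  have cX0: "carrier X0 = CX" and fX0: "form X0 = FX" unfolding X0_def by simp_all
  have polX: "polar X0 (enc v w) (enc v' w') =
      polar V v v' + polar W w w' + polar W (\<tau> v) w' + polar W (\<tau> v') w"
    if h: "v \<in> carrier V" "v' \<in> carrier V" "w \<in> carrier W" "w' \<in> carrier W" for v v' w w'
  proof -
    have "polar X0 (enc v w) (enc v' w') =
      form V (vadd v v') + form W (vadd w w') + polar W (\<tau> (vadd v v')) (vadd w w')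
      + (form V v + form W w + polar W (\<tau> v) w) + (form V v' + form W w' + polar W (\<tau> v') w')"
      unfolding polar_def fX0 FX_def by (simp add: enc_vadd)
    also have "\<dots> = polar V v v' + polar W w w' + polar W (\<tau> v) w' + polar W (\<tau> v') w"
      using h \<tau>W[OF h(1)] \<tau>W[OF h(2)]
      by (simp add: form_add[OF qV] form_add[OF qW] \<tau>lin polar_add1[OF qW] polar_add2[OF qW] sub_add[OF sW(1)]
            add_ac del: add_bit_eq_xor)
    finally show ?thesis .
  qed
  have qX: "quad_space X0" unfolding quad_space_def
  proof (intro conjI ballI)
    have "carrier X0 = (\<lambda>(x,c). enc x c) ` (carrier V \<times> carrier W)" unfolding cX0 CX_def by auto
    then show "finite (carrier X0)" using sV sW by simp
    show "subspace (carrier X0)" unfolding subspace_def cX0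
    proof (intro conjI ballI)
      show "{} \<in> CX" unfolding CX_def
        using sub_zero[OF sV(1)] sub_zero[OF sW(1)] enc_zero by blast
      fix x y assume "x \<in> CX" "y \<in> CX"
      then obtain a b c d where "x = enc a b" "y = enc c d" "a \<in> carrier V" "c \<in> carrier V"
        "b \<in> carrier W" "d \<in> carrier W" unfolding CX_def by blast
      then show "vadd x y \<in> CX" unfolding CX_def
        using sub_add[OF sV(1)] sub_add[OF sW(1)] by (auto simp: enc_vadd)
    qed
    have t0: "\<tau> {} = {}" using \<tau>lin sub_zero[OF sV(1)] by (metis vadd_self)
    show "form X0 {} = 0" unfolding fX0 FX_def
      using form_zero[OF qV] form_zero[OF qW] polar_zero[OF qW] enc_zero pr1_enc pr2_enc
      by (metis add_0 qspace.select_convs(2))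
    fix x y z assume "x \<in> carrier X0" "y \<in> carrier X0" "z \<in> carrier X0"
    then obtain a1 c1 a2 c2 a3 c3 where h: "x = enc a1 c1" "y = enc a2 c2" "z = enc a3 c3"
      "a1 \<in> carrier V" "a2 \<in> carrier V" "a3 \<in> carrier V" "c1 \<in> carrier W" "c2 \<in> carrier W" "c3 \<in> carrier W"
      unfolding cX0 CX_def by blast
    have aa: "vadd a1 a2 \<in> carrier V" using sV h sub_add by blast
    have cc: "vadd c1 c2 \<in> carrier W" using sW h sub_add by blast
    show "polar X0 (vadd x y) z = polar X0 x z + polar X0 y z"
      unfolding h enc_vadd
      using polX[OF aa h(6) cc h(9)] polX[OF h(4) h(6) h(7) h(9)] polX[OF h(5) h(6) h(8) h(9)]
        h \<tau>W[OF h(4)] \<tau>W[OF h(5)] \<tau>W[OF h(6)]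
      by (simp add: \<tau>lin polar_add1[OF qV] polar_add1[OF qW] polar_add2[OF qW] add_ac del: add_bit_eq_xor)
  qed
  have t0: "\<tau> {} = {}" using \<tau>lin sub_zero[OF sV(1)] by (metis vadd_self)
  have rWW: "rW w \<in> carrier W" if "w \<in> carrier W" for w using rW(1) gD(2) that by blast
  define i0 where "i0 v = enc v {}" for v
  define j0 where "j0 w = enc (\<kappa> w) (vadd w (rW w))" for w
  have mi: "qmor V X0 i0" unfolding qmor_def
  proof (intro conjI ballI)
    fix x assume x: "x \<in> carrier V"
    then show "i0 x \<in> carrier X0" unfolding i0_def cX0 CX_def using sub_zero[OF sW(1)] by blast
    show "form X0 (i0 x) = form V x" unfolding i0_def fX0 FX_def
      by (simp add: form_zero[OF qW] polar_zero[OF qW])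
  next
    fix x y assume "x \<in> carrier V" "y \<in> carrier V"
    show "i0 (vadd x y) = vadd (i0 x) (i0 y)" unfolding i0_def by (simp add: enc_vadd)
  next
    show "inj_on i0 (carrier V)" unfolding i0_def by (auto intro: inj_onI)
  qed
  have j0in: "j0 w \<in> carrier X0" if "w \<in> carrier W" for w
    unfolding j0_def cX0 CX_def using \<kappa>V[OF that] sub_add[OF sW(1) that rWW[OF that]] by blast
  have j0lin: "j0 (vadd x y) = vadd (j0 x) (j0 y)" if "x \<in> carrier W" "y \<in> carrier W" for x y
  proof -
    have "rW (vadd x y) = vadd (rW x) (rW y)" using rW(3) that lin_def by blast
    then show ?thesis unfolding j0_def using \<kappa>lin[OF that] by (simp add: enc_vadd vadd_ac)
  qed
  have j0ker: "w = g (gi w) \<and> \<kappa> w = f (gi w)" if wh: "w \<in> carrier W" "vadd w (rW w) = {}" for w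
  proof -
    have "w = rW w" using wh by simp
    then have wg: "w \<in> g ` carrier D" using rW(1) wh(1) by metis
    then have "w = g (gi w)" unfolding gi_def by (simp add: f_inv_into_f)
    moreover have "gi w \<in> carrier D" using gi_in[OF wg] .
    ultimately show ?thesis using \<kappa>g by metis
  qed
  have f0: "f {} = {}" using qmor_zero[OF qD mf] .
  have g0: "g {} = {}" using qmor_zero[OF qD mg] .
  have mj: "qmor W X0 j0" unfolding qmor_def
  proof (intro conjI ballI)
    fix x assume x: "x \<in> carrier W"
    then show "j0 x \<in> carrier X0" by (rule j0in)
    define s where "s = rW x"
    define d where "d = gi s"
    have sg: "s \<in> g ` carrier D" unfolding s_def using rW(1) x by blast
    have d: "d \<in> carrier D" "s = g d" unfolding d_def gi_def using sg
      by (auto simp: inv_into_into f_inv_into_f)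
    have ks: "\<kappa> x = f d" unfolding \<kappa>_def s_def[symmetric] d_def[symmetric] ..
    have sW': "s \<in> carrier W" using rWW x s_def by blast
    have u: "vadd x s \<in> carrier W" using sub_add[OF sW(1) x sW'] .
    have "form X0 (j0 x) = form V (f d) + form W (vadd x s) + polar W (\<tau> (f d)) (vadd x s)"
      unfolding j0_def fX0 FX_def s_def[symmetric] ks by simp
    also have "\<dots> = form W s + form W (vadd x s) + polar W s (vadd x s)"
      using \<tau>f[OF d(1)] d mf mg unfolding qmor_def by simp
    also have "\<dots> = form W (vadd s (vadd x s))"
      by (simp add: form_add[OF qW])
    also have "\<dots> = form W x" by (simp add: vadd_ac)
    finally show "form X0 (j0 x) = form W x" .
  next
    fix x y assume "x \<in> carrier W" "y \<in> carrier W"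
    then show "j0 (vadd x y) = vadd (j0 x) (j0 y)" by (rule j0lin)
  next
    show "inj_on j0 (carrier W)"
    proof (rule inj_onI)
      fix x y assume xy: "x \<in> carrier W" "y \<in> carrier W" "j0 x = j0 y"
      define u where "u = vadd x y"
      have u: "u \<in> carrier W" unfolding u_def using sub_add[OF sW(1)] xy by blast
      have "j0 u = {}" unfolding u_def using j0lin xy by simp
      then have k: "\<kappa> u = {}" "vadd u (rW u) = {}" unfolding j0_def by simp_all
      define d where "d = gi u"
      have "u = g d" "\<kappa> u = f d" using j0ker[OF u k(2), folded d_def] by auto
      moreover have "d \<in> carrier D" unfolding d_def using gi_in k(2) rW(1) u
        by (metis vadd_eq_empty)
      ultimately have "d = {}" using k f0 injf sub_zero[OF sD] unfolding inj_on_def by metis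
      then have "u = {}" using \<open>u = g d\<close> g0 by simp
      then show "x = y" unfolding u_def by simp
    qed
  qed
  have pb: "i0 v = j0 w \<longleftrightarrow> (\<exists>d\<in>carrier D. v = f d \<and> w = g d)"
    if vw: "v \<in> carrier V" "w \<in> carrier W" for v w
  proof
    assume "i0 v = j0 w"
    then have e: "v = \<kappa> w" "vadd w (rW w) = {}" unfolding i0_def j0_def by auto
    define d where "d = gi w"
    have "w = g d" "\<kappa> w = f d" using j0ker[OF vw(2) e(2), folded d_def] by auto
    moreover have "d \<in> carrier D" unfolding d_def using gi_in e(2) rW(1) vw(2)
      by (metis vadd_eq_empty)
    ultimately show "\<exists>d\<in>carrier D. v = f d \<and> w = g d" using e by blast
  next
    assume "\<exists>d\<in>carrier D. v = f d \<and> w = g d"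
    then obtain d where d: "d \<in> carrier D" "v = f d" "w = g d" by blast
    have "rW w = w" using rW(2) d by blast
    then show "i0 v = j0 w" unfolding i0_def j0_def using \<kappa>g d by simp
  qed
  show ?thesis using qX mi mj pb by blast
qed

theorem proposition4p20:
  fixes V W D :: qspace and f g :: "vec \<Rightarrow> vec"
  assumes "nondeg V" and "nondeg W" and "quad_space D"
    and "qmor D V f" and "qmor D W g"
  shows "\<exists>X i j. nondeg X \<and> qmor V X i \<and> qmor W X j \<and>
           span_eq (sigma_cospan V W X i j) (D, f, g)"
proof -
  have qV: "quad_space V" and qW: "quad_space W" using assms nondeg_def by auto
  from cospan_exists[OF qV qW assms(3) assms(4) assms(5)]
  obtain X0 i0 j0 where X0all: "quad_space X0 \<and> qmor V X0 i0 \<and> qmor W X0 j0 \<and>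
     (\<forall>v\<in>carrier V. \<forall>w\<in>carrier W. i0 v = j0 w \<longleftrightarrow> (\<exists>d\<in>carrier D. v = f d \<and> w = g d))"
    by (elim exE)
  have X0: "quad_space X0" "qmor V X0 i0" "qmor W X0 j0" using X0all by auto
  have pb: "\<forall>v\<in>carrier V. \<forall>w\<in>carrier W. i0 v = j0 w \<longleftrightarrow> (\<exists>d\<in>carrier D. v = f d \<and> w = g d)"
    using X0all by (elim conjE)
  obtain X e where X: "nondeg X" "qmor X0 X e" using hull[OF X0(1)] by blast
  define i where "i v = e (i0 v)" for v
  define j where "j w = e (j0 w)" for w
  have mi: "qmor V X i" unfolding i_def using qmor_comp[OF X0(2) X(2)] .
  have mj: "qmor W X j" unfolding j_def using qmor_comp[OF X0(3) X(2)] .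
  have mf: "qmor D V f" and mg: "qmor D W g" using assms by auto
  have fV: "f d \<in> carrier V" and gW: "g d \<in> carrier W" if "d \<in> carrier D" for d
    using that mf mg unfolding qmor_def by auto
  have einj: "inj_on e (carrier X0)" using X(2) qmor_def by blast
  have i0X: "i0 v \<in> carrier X0" if "v \<in> carrier V" for v using X0(2) that qmor_def by blast
  have j0X: "j0 w \<in> carrier X0" if "w \<in> carrier W" for w using X0(3) that qmor_def by blast
  have ij: "i v = j w \<longleftrightarrow> (\<exists>d\<in>carrier D. v = f d \<and> w = g d)"
    if "v \<in> carrier V" "w \<in> carrier W" for v w
  proof -
    have "i v = j w \<longleftrightarrow> i0 v = j0 w" unfolding i_def j_def
      by (rule inj_on_eq_iff[OF einj i0X[OF that(1)] j0X[OF that(2)]])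
    also have "\<dots> \<longleftrightarrow> (\<exists>d\<in>carrier D. v = f d \<and> w = g d)" using pb that by simp
    finally show ?thesis .
  qed
  define F where "F d = i (f d)" for d
  have mF: "qmor D X F" unfolding F_def using qmor_comp[OF mf mi] .
  have injF: "inj_on F (carrier D)" using mF qmor_def by blast
  have injI: "inj_on i (carrier V)" and injJ: "inj_on j (carrier W)" using mi mj qmor_def by auto
  define P where "P = pullback_obj V W X i j"
  have cP: "carrier P = F ` carrier D"
  proof
    show "carrier P \<subseteq> F ` carrier D"
    proof
      fix p assume "p \<in> carrier P"
      then obtain v w where vw: "v \<in> carrier V" "w \<in> carrier W" "p = i v" "p = j w"
        unfolding P_def pullback_obj_def by auto
      then obtain d where "d \<in> carrier D" "v = f d" using ij by metis
      then show "p \<in> F ` carrier D" unfolding F_def using vw by blast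
    qed
    show "F ` carrier D \<subseteq> carrier P"
    proof
      fix p assume "p \<in> F ` carrier D"
      then obtain d where d: "d \<in> carrier D" "p = F d" by blast
      have "i (f d) = j (g d)" using ij fV gW d by blast
      moreover have "i (f d) \<in> i ` carrier V" "j (g d) \<in> j ` carrier W" using d fV gW by auto
      ultimately show "p \<in> carrier P" unfolding P_def pullback_obj_def using d unfolding F_def by simp
    qed
  qed
  have fP: "form P = form X" unfolding P_def pullback_obj_def by simp
  define h where "h = inv_into (carrier D) F"
  have hF: "h (F d) = d" if "d \<in> carrier D" for d unfolding h_def using injF that by simp
  have sD: "subspace (carrier D)" using assms(3) quad_space_def by blast
  have mh: "qmor P D h" unfolding qmor_def cP
  proof (intro conjI ballI)
    fix x assume "x \<in> F ` carrier D"
    then obtain d where d: "d \<in> carrier D" "x = F d" by blast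
    show "h x \<in> carrier D" using d hF by simp
    show "form D (h x) = form P x" using d hF mF fP unfolding qmor_def by simp
  next
    fix x y assume "x \<in> F ` carrier D" "y \<in> F ` carrier D"
    then obtain a b where ab: "a \<in> carrier D" "x = F a" "b \<in> carrier D" "y = F b" by blast
    have "vadd x y = F (vadd a b)" using mF ab unfolding qmor_def by simp
    then show "h (vadd x y) = vadd (h x) (h y)" using ab hF sub_add[OF sD] by simp
  next
    show "inj_on h (F ` carrier D)" unfolding h_def using injF by (simp add: inj_on_inv_into)
  qed
  have himg: "h ` carrier P = carrier D" unfolding cP h_def using injF by simp
  have legs: "f (h p) = inv_into (carrier V) i p \<and> g (h p) = inv_into (carrier W) j p"
    if pP: "p \<in> carrier P" for p
  proof -
    obtain d where d: "d \<in> carrier D" "p = F d" using pP cP by blast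
    have p1: "p = i (f d)" using d unfolding F_def by simp
    have p2: "p = j (g d)" using p1 ij fV gW d by blast
    have hp: "h p = d" using d hF by simp
    have "inv_into (carrier V) i p = f d" unfolding p1 using injI fV[OF d(1)] by (rule inv_into_f_f)
    moreover have "inv_into (carrier W) j p = g d" unfolding p2 using injJ gW[OF d(1)] by (rule inv_into_f_f)
    ultimately show ?thesis using hp by simp
  qed
  have "span_eq (sigma_cospan V W X i j) (D, f, g)"
    unfolding sigma_cospan_def span_eq_def P_def[symmetric] prod.case
    using mh himg legs by blast
  then show ?thesis using X(1) mi mj by blast
qed

end
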